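(* Let $\phi,\psi\in L^\infty(\mathbb{T})$. If $V_\phi=V_\psi$, then $\phi=\psi$. That is, the correspondence $\phi\mapsto V_\phi$ from $L^\infty$ to bounded operators on $H^2$ is one-to-one.
   Context: $\mathbb{T}$ is the unit circle with normalized Lebesgue measure; $L^2=L^2(\mathbb{T})$ has orthonormal basis $e_n(z)=z^n$, $n\in\mathbb{Z}$; $H^2$ is the closed span of $\{e_n\}_{n\ge 0}$ and $P:L^2\to H^2$ is the orthogonal projection. For $\phi\in L^\infty$, $M_\phi$ is multiplication by $\phi$ on $L^2$. $W:L^2\to L^2$ is defined by $We_n=e_{n/2}$ if $n$ is even and $We_n=0$ if $n$ is odd. $K:H^2\to L^2$ is defined by $Ke_{2n}=e_n$ and $Ke_{2n+1}=e_{-n-1}$ for $n\ge 0$. The slant H-Toeplitz operator with symbol $\phi\in L^\infty$ is $V_\phi=WPM_\phi K:H^2\to H^2$. *)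

theory Defs
  imports "HOL-Analysis.Analysis"
begin

text \<open>The unit circle T is parametrised by t in [0,1] via circ t = exp(2 pi i t);
  normalized Lebesgue measure on T is Lebesgue measure on [0,1].
  L^2(T) is identified, via the orthonormal basis e_n, with square-summable
  coefficient sequences indexed by the integers (e_n corresponds to the n-th unit vector).\<close>

definition circ :: "real \<Rightarrow> complex" where
  "circ t = exp (2 * of_real pi * \<i> * of_real t)"

definition e :: "int \<Rightarrow> complex \<Rightarrow> complex" where
  "e n z = z powi n"

definition Linf :: "(complex \<Rightarrow> complex) \<Rightarrow> bool" where
  "Linf \<phi> \<longleftrightarrow> (\<lambda>t. \<phi> (circ t)) \<in> borel_measurable lborel \<and>
     (\<exists>C. AE t in lborel. t \<in> {0..1} \<longrightarrow> cmod (\<phi> (circ t)) \<le> C)"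

definition fourier :: "(complex \<Rightarrow> complex) \<Rightarrow> int \<Rightarrow> complex" where
  "fourier \<phi> n = (LINT t:{0..1}|lborel. \<phi> (circ t) * cnj (e n (circ t)))"

definition L2 :: "(int \<Rightarrow> complex) set" where
  "L2 = {a. (\<lambda>n. (cmod (a n))\<^sup>2) summable_on UNIV}"

definition H2 :: "(int \<Rightarrow> complex) set" where
  "H2 = {a. a \<in> L2 \<and> (\<forall>n<0. a n = 0)}"

definition Mop :: "(complex \<Rightarrow> complex) \<Rightarrow> (int \<Rightarrow> complex) \<Rightarrow> (int \<Rightarrow> complex)" where
  "Mop \<phi> a = (\<lambda>n. \<Sum>\<^sub>\<infinity>m. fourier \<phi> (n - m) * a m)"

definition Pop :: "(int \<Rightarrow> complex) \<Rightarrow> (int \<Rightarrow> complex)" where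
  "Pop a = (\<lambda>n. if n \<ge> 0 then a n else 0)"

text \<open>W e_n = e_(n/2) for even n, 0 for odd n.\<close>
definition Wop :: "(int \<Rightarrow> complex) \<Rightarrow> (int \<Rightarrow> complex)" where
  "Wop a = (\<lambda>n. a (2 * n))"

text \<open>K e_(2n) = e_n, K e_(2n+1) = e_(-n-1) for n >= 0 (applied to elements of H^2).\<close>
definition Kop :: "(int \<Rightarrow> complex) \<Rightarrow> (int \<Rightarrow> complex)" where
  "Kop a = (\<lambda>n. if n \<ge> 0 then a (2 * n) else a (- 2 * n - 1))"

definition slantHT :: "(complex \<Rightarrow> complex) \<Rightarrow> (int \<Rightarrow> complex) \<Rightarrow> (int \<Rightarrow> complex)" where
  "slantHT \<phi> a = Wop (Pop (Mop \<phi> (Kop a)))"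

end

theory Submission
  imports Defs "HOL-Probability.Distribution_Functions"
begin

definition dl :: "int \<Rightarrow> int \<Rightarrow> complex" where
  "dl k = (\<lambda>n. if n = k then 1 else 0)"

lemma dl_H2: "k \<ge> 0 \<Longrightarrow> dl k \<in> H2"
proof -
  assume k: "k \<ge> 0"
  have "(\<lambda>n. (cmod (dl k n))\<^sup>2) summable_on {k}" by simp
  hence "(\<lambda>n. (cmod (dl k n))\<^sup>2) summable_on UNIV"
    by (rule summable_on_cong_neutral[THEN iffD1, rotated -1]) (auto simp: dl_def)
  thus ?thesis using k unfolding H2_def L2_def by (auto simp: dl_def)
qed

lemma Kop_dl: "\<exists>k\<ge>0. Kop (dl k) = dl m"
proof (cases "m \<ge> 0")
  case True
  show ?thesis
    by (rule exI[of _ "2*m"]) (use True in \<open>auto simp: Kop_def dl_def fun_eq_iff; presburger\<close>)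
next
  case False
  show ?thesis
    by (rule exI[of _ "-2*m-1"]) (use False in \<open>auto simp: Kop_def dl_def fun_eq_iff; presburger\<close>)
qed

lemma Mop_dl: "Mop \<phi> (dl m) n = fourier \<phi> (n - m)"
proof -
  have "Mop \<phi> (dl m) n = (\<Sum>\<^sub>\<infinity>j\<in>{m}. fourier \<phi> (n - j) * dl m j)"
    unfolding Mop_def by (rule infsum_cong_neutral) (auto simp: dl_def)
  thus ?thesis by (simp add: dl_def)
qed


lemma fourier_eq:
  assumes "\<forall>a\<in>H2. slantHT \<phi> a = slantHT \<psi> a"
  shows "fourier \<phi> n = fourier \<psi> n"
proof -
  obtain k where k: "k \<ge> 0" "Kop (dl k) = dl (-n)" using Kop_dl by blast
  have "slantHT \<phi> (dl k) 0 = slantHT \<psi> (dl k) 0" using assms dl_H2[OF k(1)] by auto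
  thus ?thesis unfolding slantHT_def Wop_def Pop_def k(2) by (simp add: Mop_dl)
qed


lemma circ_norm[simp]: "cmod (circ t) = 1"
  unfolding circ_def by (simp add: norm_exp_eq_Re)

lemma circ_nz[simp]: "circ t \<noteq> 0"
  by (metis circ_norm norm_zero zero_neq_one)

lemma cnj_circ: "cnj (circ t) = inverse (circ t)"
proof -
  have "circ t * cnj (circ t) = 1" using complex_norm_square[of "circ t"] by simp
  thus ?thesis by (rule inverse_unique[symmetric])
qed

lemma circ_powi: "circ t powi n = circ (of_int n * t)"
  unfolding circ_def by (simp add: exp_power_int algebra_simps)

lemma cont_circ[continuous_intros]: "continuous_on A circ"
  unfolding circ_def by (intro continuous_intros)

lemma meas_circ[measurable]: "circ \<in> borel_measurable borel"
  by (intro borel_measurable_continuous_onI cont_circ)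

lemma cnj_e_circ: "cnj (e n (circ t)) = circ t powi (-n)"
  unfolding e_def by (simp add: cnj_circ power_int_minus power_int_inverse)

lemma Linf_int:
  assumes "Linf \<phi>"
  shows "set_integrable lborel {0..1} (\<lambda>t. \<phi> (circ t))"
proof -
  obtain C where C: "AE t in lborel. t \<in> {0..1} \<longrightarrow> cmod (\<phi> (circ t)) \<le> C"
    and m: "(\<lambda>t. \<phi> (circ t)) \<in> borel_measurable lborel"
    using assms unfolding Linf_def by blast
  have i: "integrable lborel (\<lambda>t. indicator {0..1::real} t * C)"
    by (intro integrable_mult_left integrable_real_indicator) auto
  show ?thesis unfolding set_integrable_def
  proof (rule Bochner_Integration.integrable_bound[OF i])
    show "(\<lambda>x. indicat_real {0..1} x *\<^sub>R \<phi> (circ x)) \<in> borel_measurable lborel"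
      using m by measurable
    show "AE x in lborel. norm (indicat_real {0..1} x *\<^sub>R \<phi> (circ x)) \<le> norm (indicat_real {0..1} x * C)"
      using C by eventually_elim (auto simp: indicator_def)
  qed
qed

lemma set_int_bounded_mult:
  fixes f g :: "real \<Rightarrow> complex"
  assumes f: "set_integrable lborel {0..1} f" and g: "g \<in> borel_measurable borel"
    and B: "\<And>t. t \<in> {0..1} \<Longrightarrow> norm (g t) \<le> B"
  shows "set_integrable lborel {0..1} (\<lambda>t. f t * g t)"
proof -
  have i: "integrable lborel (\<lambda>t. norm (indicator {0..1::real} t *\<^sub>R f t) * B)"
    using f unfolding set_integrable_def by (intro integrable_mult_left integrable_norm)
  have fm: "(\<lambda>t. indicator {0..1::real} t *\<^sub>R f t) \<in> borel_measurable lborel"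
    using f unfolding set_integrable_def by (rule borel_measurable_integrable)
  show ?thesis unfolding set_integrable_def
  proof (rule Bochner_Integration.integrable_bound[OF i])
    show "(\<lambda>x. indicat_real {0..1} x *\<^sub>R (f x * g x)) \<in> borel_measurable lborel"
      using fm g by (simp add: scaleR_conv_of_real mult.assoc[symmetric])
    show "AE x in lborel. norm (indicat_real {0..1} x *\<^sub>R (f x * g x)) \<le> norm (norm (indicat_real {0..1} x *\<^sub>R f x) * B)"
    proof (rule AE_I2)
      fix x show "norm (indicat_real {0..1} x *\<^sub>R (f x * g x)) \<le> norm (norm (indicat_real {0..1} x *\<^sub>R f x) * B)"
        using B[of x] by (auto simp: indicator_def norm_mult intro!: mult_left_mono order.trans[OF _ abs_ge_self])
    qed
  qed
qed

inductive TPt :: "(real \<Rightarrow> complex) \<Rightarrow> bool" where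
  mono: "TPt (\<lambda>t. c * circ t powi n)"
| add: "TPt g \<Longrightarrow> TPt h \<Longrightarrow> TPt (\<lambda>t. g t + h t)"

lemma TPt_mult: "TPt g \<Longrightarrow> TPt h \<Longrightarrow> TPt (\<lambda>t. g t * h t)"
proof (induction g rule: TPt.induct)
  case (mono c n)
  from mono show ?case
  proof (induction h rule: TPt.induct)
    case (mono d m)
    have "(\<lambda>t. c * circ t powi n * (d * circ t powi m)) = (\<lambda>t. (c * d) * circ t powi (n + m))"
      by (auto simp: power_int_add fun_eq_iff)
    then show ?case by (simp add: TPt.mono)
  next
    case (add g h)
    then show ?case using TPt.add[OF add.IH] by (simp add: distrib_left)
  qed
next
  case (add g1 g2)
  then show ?case using TPt.add[OF add.IH] by (simp add: distrib_right)
qed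

lemma TPt_meas: "TPt g \<Longrightarrow> g \<in> borel_measurable borel"
  by (induction rule: TPt.induct) (auto simp: circ_powi)

lemma TPt_bound: "TPt g \<Longrightarrow> \<exists>B. \<forall>t. norm (g t) \<le> B"
proof (induction rule: TPt.induct)
  case (mono c n)
  then show ?case by (auto simp: circ_powi norm_mult)
next
  case (add g h)
  then obtain B1 B2 where "\<forall>t. norm (g t) \<le> B1" "\<forall>t. norm (h t) \<le> B2" by blast
  then show ?case by (intro exI[of _ "B1 + B2"]) (auto intro: norm_triangle_le add_mono)
qed

lemma TPt_int:
  fixes f :: "real \<Rightarrow> complex"
  assumes f: "set_integrable lborel {0..1} f"
    and z: "\<And>n. (LINT t:{0..1}|lborel. f t * circ t powi n) = 0"
  shows "TPt g \<Longrightarrow> set_integrable lborel {0..1} (\<lambda>t. f t * g t) \<and> (LINT t:{0..1}|lborel. f t * g t) = 0"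
proof (induction rule: TPt.induct)
  case (mono c n)
  have i: "set_integrable lborel {0..1} (\<lambda>t. f t * (c * circ t powi n))"
    by (rule set_int_bounded_mult[OF f, of _ "cmod c"]) (auto simp: circ_powi norm_mult)
  have "(LINT t:{0..1}|lborel. f t * (c * circ t powi n)) = (LINT t:{0..1}|lborel. c * (f t * circ t powi n))"
    by (simp add: algebra_simps)
  also have "\<dots> = 0" using z by simp
  finally show ?case using i by simp
next
  case (add g h)
  then show ?case by (simp add: distrib_left)
qed

lemma linear_decomp:
  assumes "bounded_linear q"
  shows "q (z::complex) = Re z * q 1 + Im z * q \<i>"
proof -
  interpret bounded_linear q by fact
  have "z = Re z *\<^sub>R 1 + Im z *\<^sub>R \<i>" by (simp add: complex_eq_iff)
  hence "q z = q (Re z *\<^sub>R 1 + Im z *\<^sub>R \<i>)" by simp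
  also have "\<dots> = Re z *\<^sub>R q 1 + Im z *\<^sub>R q \<i>" by (simp add: add scale)
  finally show ?thesis by simp
qed

lemma rpf_TPt:
  "real_polynomial_function q \<Longrightarrow> TPt (\<lambda>t. complex_of_real (q (circ t)))"
proof (induction rule: real_polynomial_function.induct)
  case (linear q)
  define a where "a = complex_of_real (q 1) / 2 + complex_of_real (q \<i>) / (2 * \<i>)"
  define b where "b = complex_of_real (q 1) / 2 - complex_of_real (q \<i>) / (2 * \<i>)"
  have "complex_of_real (q (circ t)) = a * circ t powi 1 + b * circ t powi (-1)" for t
  proof -
    have r: "complex_of_real (Re (circ t)) = (circ t + inverse (circ t)) / 2"
      by (simp add: complex_eq_iff cnj_circ[symmetric])
    have i: "complex_of_real (Im (circ t)) = (circ t - inverse (circ t)) / (2 * \<i>)"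
      by (simp add: complex_eq_iff cnj_circ[symmetric])
    show ?thesis
      unfolding linear_decomp[OF linear, of "circ t"] a_def b_def
      by (simp add: r i power_int_minus field_simps)
  qed
  hence eq: "(\<lambda>t. complex_of_real (q (circ t))) = (\<lambda>t. a * circ t powi 1 + b * circ t powi (-1))"
    by auto
  show ?case unfolding eq by (rule TPt.add[OF TPt.mono TPt.mono])
next
  case (const c)
  then show ?case using TPt.mono[of "complex_of_real c" 0] by simp
next
  case (add f g)
  then show ?case using TPt.add by fastforce
next
  case (mult f g)
  then show ?case using TPt_mult by fastforce
qed


lemma circ_sphere: "circ t \<in> sphere 0 1"
  by simp

lemma eps_zero:
  fixes x N :: real
  assumes "N \<ge> 0" "\<And>e. e > 0 \<Longrightarrow> x \<le> e * N"
  shows "x \<le> 0"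
proof (rule ccontr)
  assume "\<not> x \<le> 0"
  hence x: "x > 0" by simp
  define e where "e = x / (2 * (N + 1))"
  have e: "e > 0" using x assms(1) by (simp add: e_def)
  have "e * N < x"
    using x assms(1) unfolding e_def by (simp add: field_simps) (smt (verit, best) mult_nonneg_nonneg)
  with assms(2)[OF e] show False by simp
qed

lemma SW_int:
  fixes f :: "real \<Rightarrow> complex" and Q :: "complex \<Rightarrow> real"
  assumes f: "set_integrable lborel {0..1} f"
    and z: "\<And>n. (LINT t:{0..1}|lborel. f t * circ t powi n) = 0"
    and Q: "continuous_on UNIV Q"
  shows "set_integrable lborel {0..1} (\<lambda>t. f t * complex_of_real (Q (circ t)))
     \<and> (LINT t:{0..1}|lborel. f t * complex_of_real (Q (circ t))) = 0"
proof -
  have "compact (Q ` sphere 0 1)"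
    by (rule compact_continuous_image[OF continuous_on_subset[OF Q]]) auto
  then obtain B where B: "\<And>y. y \<in> Q ` sphere 0 1 \<Longrightarrow> norm y \<le> B"
    using compact_imp_bounded bounded_iff by metis
  have Qm: "(\<lambda>t. complex_of_real (Q (circ t))) \<in> borel_measurable borel"
    by (intro borel_measurable_continuous_onI continuous_intros continuous_on_compose2[OF Q]) auto
  have int: "set_integrable lborel {0..1} (\<lambda>t. f t * complex_of_real (Q (circ t)))"
    by (rule set_int_bounded_mult[OF f Qm, of B]) (use B in auto)
  define I where "I = (LINT t:{0..1}|lborel. f t * complex_of_real (Q (circ t)))"
  define N where "N = integral\<^sup>L lborel (\<lambda>t. norm (indicator {0..1::real} t *\<^sub>R f t))"
  have N0: "N \<ge> 0" unfolding N_def by (rule integral_nonneg_AE) auto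
  have "norm I \<le> e * N" if e: "e > 0" for e
  proof -
    obtain q where q: "real_polynomial_function q" "\<And>x. x \<in> sphere 0 1 \<Longrightarrow> \<bar>Q x - q x\<bar> < e"
      using Stone_Weierstrass_real_polynomial_function[OF compact_sphere continuous_on_subset[OF Q] e]
      by blast
    note qz = TPt_int[OF f z rpf_TPt[OF q(1)]]
    have I: "I = (LINT t:{0..1}|lborel. f t * complex_of_real (Q (circ t)) - f t * complex_of_real (q (circ t)))"
      unfolding I_def using set_integral_diff(2)[OF int conjunct1[OF qz]] conjunct2[OF qz] by simp
    have "norm I \<le> integral\<^sup>L lborel (\<lambda>t. norm (indicator {0..1::real} t *\<^sub>R f t) * e)"
      unfolding I set_lebesgue_integral_def
    proof (rule Bochner_Integration.integral_norm_bound_integral)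
      show "integrable lborel (\<lambda>x. indicat_real {0..1} x *\<^sub>R (f x * complex_of_real (Q (circ x)) - f x * complex_of_real (q (circ x))))"
        using set_integral_diff(1)[OF int conjunct1[OF qz]] unfolding set_integrable_def .
      show "integrable lborel (\<lambda>t. norm (indicat_real {0..1} t *\<^sub>R f t) * e)"
        using f unfolding set_integrable_def by (intro integrable_mult_left integrable_norm)
      fix x
      have "norm (indicat_real {0..1} x *\<^sub>R (f x * complex_of_real (Q (circ x)) - f x * complex_of_real (q (circ x))))
          = norm (indicat_real {0..1} x *\<^sub>R f x) * \<bar>Q (circ x) - q (circ x)\<bar>"
      proof -
        have "indicat_real {0..1} x *\<^sub>R (f x * complex_of_real (Q (circ x)) - f x * complex_of_real (q (circ x)))
          = (indicat_real {0..1} x *\<^sub>R f x) * complex_of_real (Q (circ x) - q (circ x))"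
          by (simp add: algebra_simps)
        thus ?thesis by (simp only: norm_mult norm_of_real)
      qed
      also have "\<dots> \<le> norm (indicat_real {0..1} x *\<^sub>R f x) * e"
        using q(2)[OF circ_sphere[of x]] by (intro mult_left_mono) auto
      finally show "norm (indicat_real {0..1} x *\<^sub>R (f x * complex_of_real (Q (circ x)) - f x * complex_of_real (q (circ x)))) \<le> norm (indicat_real {0..1} x *\<^sub>R f x) * e" .
    qed
    also have "\<dots> = e * N" unfolding N_def by simp
    finally show ?thesis .
  qed
  hence "norm I \<le> 0" by (intro eps_zero[OF N0]) auto
  thus ?thesis using int unfolding I_def by simp
qed


lemma circ_cis: "circ t = cis (2 * pi * t)"
  unfolding circ_def cis_conv_exp by (simp add: mult_ac)

lemma Re_circ_cnj: "Re (circ t * cnj (circ s)) = cos (2 * pi * (t - s))"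
  unfolding circ_cis cis_cnj cis_mult by (simp add: algebra_simps)

lemma arc_char:
  fixes x t :: real
  assumes x: "0 < x" "x < 1" and t: "0 \<le> t" "t \<le> 1" "t \<noteq> 0" "t \<noteq> x"
  shows "cos (pi * x) < cos (2 * pi * (t - x / 2)) \<longleftrightarrow> t \<le> x"
proof (cases "t < x")
  case True
  have "cos (pi * x) < cos (2 * pi * \<bar>t - x / 2\<bar>)"
    by (rule cos_monotone_0_pi) (use x t True in \<open>auto simp: abs_if algebra_simps\<close>)
  also have "2 * pi * \<bar>t - x / 2\<bar> = \<bar>2 * pi * (t - x / 2)\<bar>" by (simp add: abs_mult)
  finally show ?thesis using True by simp
next
  case False
  hence tx: "x < t" using t by simp
  show ?thesis
  proof (cases "t - x / 2 \<le> 1 / 2")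
    case True
    have le: "pi * (2 * (t - x / 2)) \<le> pi * 1"
      by (rule mult_left_mono) (use True in auto)
    have lt: "pi * x < pi * (2 * (t - x / 2))"
      by (rule mult_strict_left_mono) (use tx in auto)
    have "cos (2 * pi * (t - x / 2)) < cos (pi * x)"
      by (rule cos_monotone_0_pi) (use x le lt in \<open>auto simp: mult_ac\<close>)
    thus ?thesis using tx by simp
  next
    case False
    have le: "pi * (2 * (1 - (t - x / 2))) \<le> pi * 1"
      by (rule mult_left_mono) (use False in auto)
    have lt: "pi * x \<le> pi * (2 * (1 - (t - x / 2)))"
      by (rule mult_left_mono) (use t in auto)
    have "cos (2 * pi - 2 * pi * (t - x / 2)) \<le> cos (pi * x)"
      by (rule cos_monotone_0_pi_le) (use x le lt in \<open>auto simp: algebra_simps\<close>)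
    thus ?thesis using tx by simp
  qed
qed

lemma tendsto_clip:
  fixes d :: real
  shows "(\<lambda>k. min 1 (max 0 ((real k + 1) * d))) \<longlonglongrightarrow> (if 0 < d then 1 else 0)"
proof (cases "0 < d")
  case True
  obtain N :: nat where N: "1 / d \<le> real N" using real_arch_simple by blast
  have "eventually (\<lambda>k. min 1 (max 0 ((real k + 1) * d)) = 1) sequentially"
    unfolding eventually_sequentially
  proof (intro exI allI impI)
    fix k assume "N \<le> k"
    hence "1 / d \<le> real k + 1" using N by linarith
    hence "1 \<le> (real k + 1) * d" using True by (simp add: field_simps)
    thus "min 1 (max 0 ((real k + 1) * d)) = 1" by simp
  qed
  thus ?thesis using True by (simp add: tendsto_eventually)
next
  case False
  have "min 1 (max 0 ((real k + 1) * d)) = 0" for k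
    using False by (simp add: mult_nonneg_nonpos)
  thus ?thesis using False by simp
qed

lemma arc_int:
  fixes f :: "real \<Rightarrow> complex"
  assumes f: "set_integrable lborel {0..1} f"
    and z: "\<And>n. (LINT t:{0..1}|lborel. f t * circ t powi n) = 0"
    and x: "0 < x" "x < 1"
  shows "(LINT t:{0..x}|lborel. f t) = 0"
proof -
  define w where "w = circ (x / 2)"
  define c where "c = cos (pi * x)"
  define Qk where "Qk k z = min 1 (max 0 ((real k + 1) * (Re (z * cnj w) - c)))" for k :: nat and z
  define ind where "ind t = (if c < Re (circ t * cnj w) then 1 else 0 :: real)" for t
  have cont: "continuous_on UNIV (Qk k)" for k
    unfolding Qk_def by (intro continuous_intros)
  have fm: "(\<lambda>t. indicator {0..1::real} t *\<^sub>R f t) \<in> borel_measurable lborel"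
    using f unfolding set_integrable_def by (rule borel_measurable_integrable)
  have indm: "ind \<in> borel_measurable borel"
    unfolding ind_def by measurable
  have Qm: "(\<lambda>t. Qk k (circ t)) \<in> borel_measurable borel" for k
    by (intro borel_measurable_continuous_onI continuous_on_compose2[OF cont[of k]] cont_circ) auto
  have lim: "(\<lambda>k. Qk k (circ t)) \<longlonglongrightarrow> ind t" for t
    unfolding Qk_def ind_def using tendsto_clip[of "Re (circ t * cnj w) - c"] by simp
  have zero: "integral\<^sup>L lborel (\<lambda>t. indicator {0..1::real} t *\<^sub>R (f t * complex_of_real (Qk k (circ t)))) = 0" for k
    using conjunct2[OF SW_int[OF f z cont[of k]]] unfolding set_lebesgue_integral_def .
  have "(\<lambda>k. integral\<^sup>L lborel (\<lambda>t. indicator {0..1::real} t *\<^sub>R (f t * complex_of_real (Qk k (circ t)))))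
      \<longlonglongrightarrow> integral\<^sup>L lborel (\<lambda>t. indicator {0..1::real} t *\<^sub>R (f t * complex_of_real (ind t)))"
  proof (rule integral_dominated_convergence[where w = "\<lambda>t. norm (indicator {0..1::real} t *\<^sub>R f t)"])
    show "(\<lambda>t. indicator {0..1::real} t *\<^sub>R (f t * complex_of_real (ind t))) \<in> borel_measurable lborel"
      using fm indm by (simp add: scaleR_conv_of_real mult.assoc[symmetric])
    show "(\<lambda>t. indicator {0..1::real} t *\<^sub>R (f t * complex_of_real (Qk k (circ t)))) \<in> borel_measurable lborel" for k
      using fm Qm[of k] by (simp add: scaleR_conv_of_real mult.assoc[symmetric])
    show "integrable lborel (\<lambda>t. norm (indicator {0..1::real} t *\<^sub>R f t))"
      using f unfolding set_integrable_def by (rule integrable_norm)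
    show "AE t in lborel. (\<lambda>k. indicator {0..1::real} t *\<^sub>R (f t * complex_of_real (Qk k (circ t))))
        \<longlonglongrightarrow> indicator {0..1::real} t *\<^sub>R (f t * complex_of_real (ind t))"
      by (intro AE_I2 tendsto_intros lim)
    show "AE t in lborel. norm (indicator {0..1::real} t *\<^sub>R (f t * complex_of_real (Qk k (circ t))))
        \<le> norm (indicator {0..1::real} t *\<^sub>R f t)" for k
    proof (rule AE_I2)
      fix t
      have "\<bar>Qk k (circ t)\<bar> \<le> 1" unfolding Qk_def by simp
      thus "norm (indicator {0..1::real} t *\<^sub>R (f t * complex_of_real (Qk k (circ t))))
        \<le> norm (indicator {0..1::real} t *\<^sub>R f t)"
        by (auto simp: norm_mult indicator_def intro: mult_left_le)
    qed
  qed
  hence lim0: "integral\<^sup>L lborel (\<lambda>t. indicator {0..1::real} t *\<^sub>R (f t * complex_of_real (ind t))) = 0"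
    unfolding zero by (intro sym[OF LIMSEQ_unique[OF tendsto_const]])
  have ae: "AE t in lborel. t \<notin> {0, x}"
    by (rule AE_not_in[OF countable_imp_null_set_lborel]) auto
  have "(LINT t:{0..x}|lborel. f t) = integral\<^sup>L lborel (\<lambda>t. indicator {0..1::real} t *\<^sub>R (f t * complex_of_real (ind t)))"
    unfolding set_lebesgue_integral_def
  proof (rule integral_cong_AE)
    show "(\<lambda>t. indicator {0..x} t *\<^sub>R f t) \<in> borel_measurable lborel"
    proof -
      have "(\<lambda>t. indicator {0..x} t *\<^sub>R (indicator {0..1::real} t *\<^sub>R f t)) \<in> borel_measurable lborel"
        using fm by measurable
      moreover have "(\<lambda>t. indicator {0..x} t *\<^sub>R (indicator {0..1::real} t *\<^sub>R f t)) = (\<lambda>t. indicator {0..x} t *\<^sub>R f t)"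
        using x by (auto simp: indicator_def fun_eq_iff)
      ultimately show ?thesis by simp
    qed
    show "(\<lambda>t. indicator {0..1::real} t *\<^sub>R (f t * complex_of_real (ind t))) \<in> borel_measurable lborel"
      using fm indm by (simp add: scaleR_conv_of_real mult.assoc[symmetric])
    show "AE t in lborel. indicator {0..x} t *\<^sub>R f t = indicator {0..1::real} t *\<^sub>R (f t * complex_of_real (ind t))"
      using ae
    proof eventually_elim
      case (elim t)
      show ?case
      proof (cases "0 \<le> t \<and> t \<le> 1")
        case True
        have "ind t = (if t \<le> x then 1 else 0)"
          unfolding ind_def w_def c_def Re_circ_cnj using arc_char[OF x, of t] True elim by auto
        thus ?thesis using True x by (auto simp: indicator_def)
      next
        case False
        thus ?thesis using x by (auto simp: indicator_def)
      qed
    qed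
  qed
  thus ?thesis using lim0 by simp
qed


lemma dens_measure:
  fixes p :: "real \<Rightarrow> real"
  assumes p: "integrable lborel p" and nn: "\<And>t. p t \<ge> 0"
  shows "finite_borel_measure (density lborel (\<lambda>t. ennreal (p t)))"
    and "\<And>x. measure (density lborel (\<lambda>t. ennreal (p t))) {..x} = integral\<^sup>L lborel (\<lambda>t. p t * indicator {..x} t)"
proof -
  have pm: "p \<in> borel_measurable borel" using p by (simp add: borel_measurable_integrable)
  have em: "emeasure (density lborel (\<lambda>t. ennreal (p t))) A = ennreal (integral\<^sup>L lborel (\<lambda>t. p t * indicator A t))"
    if A: "A \<in> sets borel" for A
  proof -
    have "emeasure (density lborel (\<lambda>t. ennreal (p t))) A = (\<integral>\<^sup>+ t. ennreal (p t) * indicator A t \<partial>lborel)"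
      using A pm by (subst emeasure_density) auto
    also have "\<dots> = (\<integral>\<^sup>+ t. ennreal (p t * indicator A t) \<partial>lborel)"
      by (intro nn_integral_cong) (auto simp: indicator_def)
    also have "\<dots> = ennreal (integral\<^sup>L lborel (\<lambda>t. p t * indicator A t))"
      using A nn by (intro nn_integral_eq_integral integrable_real_mult_indicator p) auto
    finally show ?thesis .
  qed
  have fin: "finite_measure (density lborel (\<lambda>t. ennreal (p t)))"
    by (rule finite_measureI) (use em[of UNIV] in simp)
  show "finite_borel_measure (density lborel (\<lambda>t. ennreal (p t)))"
    by (rule finite_borel_measure.intro[OF fin]) (unfold_locales, simp)
  fix x
  have "integral\<^sup>L lborel (\<lambda>t. p t * indicator {..x} t) \<ge> 0"
    using nn by (intro integral_nonneg_AE) auto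
  thus "measure (density lborel (\<lambda>t. ennreal (p t))) {..x} = integral\<^sup>L lborel (\<lambda>t. p t * indicator {..x} t)"
    unfolding measure_def using em[of "{..x}"] by simp
qed

lemma cdf_zero_ae:
  fixes h :: "real \<Rightarrow> real"
  assumes h: "integrable lborel h"
    and z: "\<And>x. integral\<^sup>L lborel (\<lambda>t. h t * indicator {..x} t) = 0"
  shows "AE t in lborel. h t = 0"
proof -
  define p1 where "p1 t = max 0 (h t)" for t
  define p2 where "p2 t = max 0 (- h t)" for t
  have i1: "integrable lborel p1" unfolding p1_def using h by auto
  have i2: "integrable lborel p2" unfolding p2_def using h by auto
  have "density lborel (\<lambda>t. ennreal (p1 t)) = density lborel (\<lambda>t. ennreal (p2 t))"
  proof (rule cdf_unique')
    show "finite_borel_measure (density lborel (\<lambda>t. ennreal (p1 t)))"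
      by (rule dens_measure(1)[OF i1]) (simp add: p1_def)
    show "finite_borel_measure (density lborel (\<lambda>t. ennreal (p2 t)))"
      by (rule dens_measure(1)[OF i2]) (simp add: p2_def)
    show "cdf (density lborel (\<lambda>t. ennreal (p1 t))) = cdf (density lborel (\<lambda>t. ennreal (p2 t)))"
    proof
      fix x
      have "integral\<^sup>L lborel (\<lambda>t. p1 t * indicator {..x} t) - integral\<^sup>L lborel (\<lambda>t. p2 t * indicator {..x} t)
          = integral\<^sup>L lborel (\<lambda>t. p1 t * indicator {..x} t - p2 t * indicator {..x} t)"
        by (rule Bochner_Integration.integral_diff[symmetric]; rule integrable_real_mult_indicator) (auto simp: i1 i2)
      also have "\<dots> = integral\<^sup>L lborel (\<lambda>t. h t * indicator {..x} t)"
        by (intro Bochner_Integration.integral_cong) (auto simp: p1_def p2_def indicator_def)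
      finally show "cdf (density lborel (\<lambda>t. ennreal (p1 t))) x = cdf (density lborel (\<lambda>t. ennreal (p2 t))) x"
        unfolding cdf_def using z[of x] dens_measure(2)[OF i1, of x] dens_measure(2)[OF i2, of x]
        by (simp add: p1_def p2_def)
    qed
  qed
  hence "AE t in lborel. ennreal (p1 t) = ennreal (p2 t)"
    using i1 i2 by (intro sigma_finite_measure.density_unique[OF sigma_finite_lborel]) (auto simp: borel_measurable_integrable)
  thus ?thesis
    by eventually_elim (auto simp: p1_def p2_def max_def split: if_splits)
qed

lemma ae_zero_g:
  fixes g :: "real \<Rightarrow> real"
  assumes g: "set_integrable lborel {0..1} g"
    and z: "\<And>x. 0 < x \<Longrightarrow> x < 1 \<Longrightarrow> (LINT t:{0..x}|lborel. g t) = 0"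
    and z1: "(LINT t:{0..1}|lborel. g t) = 0"
  shows "AE t in lborel. t \<in> {0..1} \<longrightarrow> g t = 0"
proof -
  define h where "h t = indicator {0..1} t * g t" for t
  have hi: "integrable lborel h" using g unfolding set_integrable_def h_def by simp
  have "AE t in lborel. h t = 0"
  proof (rule cdf_zero_ae[OF hi])
    fix x :: real
    consider "x \<le> 0" | "0 < x" "x < 1" | "1 \<le> x" by linarith
    then show "integral\<^sup>L lborel (\<lambda>t. h t * indicator {..x} t) = 0"
    proof cases
      case 1
      have "AE t in lborel. t \<notin> {0}"
        by (rule AE_not_in[OF countable_imp_null_set_lborel]) auto
      hence "AE t in lborel. h t * indicator {..x} t = 0"
        by eventually_elim (use 1 in \<open>auto simp: h_def indicator_def\<close>)
      thus ?thesis by (rule integral_eq_zero_AE)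
    next
      case 2
      have "integral\<^sup>L lborel (\<lambda>t. h t * indicator {..x} t) = (LINT t:{0..x}|lborel. g t)"
        unfolding set_lebesgue_integral_def
        by (intro Bochner_Integration.integral_cong) (use 2 in \<open>auto simp: h_def indicator_def\<close>)
      thus ?thesis using z[OF 2] by simp
    next
      case 3
      have "integral\<^sup>L lborel (\<lambda>t. h t * indicator {..x} t) = (LINT t:{0..1}|lborel. g t)"
        unfolding set_lebesgue_integral_def
        by (intro Bochner_Integration.integral_cong) (use 3 in \<open>auto simp: h_def indicator_def\<close>)
      thus ?thesis using z1 by simp
    qed
  qed
  thus ?thesis by eventually_elim (auto simp: h_def)
qed

lemma set_Re_Im:
  fixes f :: "real \<Rightarrow> complex"
  assumes "set_integrable lborel A f"
  shows "set_integrable lborel A (\<lambda>t. Re (f t))" "(LINT t:A|lborel. Re (f t)) = Re (LINT t:A|lborel. f t)"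
    "set_integrable lborel A (\<lambda>t. Im (f t))" "(LINT t:A|lborel. Im (f t)) = Im (LINT t:A|lborel. f t)"
proof -
  have i: "integrable lborel (\<lambda>x. indicat_real A x *\<^sub>R f x)"
    using assms unfolding set_integrable_def .
  have r: "(\<lambda>x. indicat_real A x *\<^sub>R Re (f x)) = (\<lambda>x. Re (indicat_real A x *\<^sub>R f x))"
    and m: "(\<lambda>x. indicat_real A x *\<^sub>R Im (f x)) = (\<lambda>x. Im (indicat_real A x *\<^sub>R f x))"
    by auto
  show "set_integrable lborel A (\<lambda>t. Re (f t))"
    unfolding set_integrable_def r by (rule integrable_Re[OF i])
  show "set_integrable lborel A (\<lambda>t. Im (f t))"
    unfolding set_integrable_def m by (rule integrable_Im[OF i])
  show "(LINT t:A|lborel. Re (f t)) = Re (LINT t:A|lborel. f t)"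
    unfolding set_lebesgue_integral_def r by (rule Bochner_Integration.integral_Re[OF i])
  show "(LINT t:A|lborel. Im (f t)) = Im (LINT t:A|lborel. f t)"
    unfolding set_lebesgue_integral_def m by (rule Bochner_Integration.integral_Im[OF i])
qed

theorem mainTheorem1:
  fixes \<phi> \<psi> :: "complex \<Rightarrow> complex"
  assumes "Linf \<phi>" and "Linf \<psi>"
    and "\<forall>a\<in>H2. slantHT \<phi> a = slantHT \<psi> a"
  shows "AE t in lborel. t \<in> {0..1} \<longrightarrow> \<phi> (circ t) = \<psi> (circ t)"
proof -
  define f where "f t = \<phi> (circ t) - \<psi> (circ t)" for t
  have iF: "set_integrable lborel {0..1} (\<lambda>t. \<phi> (circ t))" by (rule Linf_int[OF assms(1)])
  have iG: "set_integrable lborel {0..1} (\<lambda>t. \<psi> (circ t))" by (rule Linf_int[OF assms(2)])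
  have fi: "set_integrable lborel {0..1} f"
    unfolding f_def by (rule set_integral_diff(1)[OF iF iG])
  have fou: "fourier gg (-n) = (LINT t:{0..1}|lborel. gg (circ t) * circ t powi n)" for gg n
    unfolding fourier_def cnj_e_circ by simp
  have z: "(LINT t:{0..1}|lborel. f t * circ t powi n) = 0" for n
  proof -
    have pm: "(\<lambda>t. circ t powi n) \<in> borel_measurable borel" by (simp add: circ_powi)
    have a: "set_integrable lborel {0..1} (\<lambda>t. \<phi> (circ t) * circ t powi n)"
      by (rule set_int_bounded_mult[OF iF pm, of 1]) (simp add: circ_powi)
    have b: "set_integrable lborel {0..1} (\<lambda>t. \<psi> (circ t) * circ t powi n)"
      by (rule set_int_bounded_mult[OF iG pm, of 1]) (simp add: circ_powi)
    have "(LINT t:{0..1}|lborel. f t * circ t powi n)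
        = (LINT t:{0..1}|lborel. \<phi> (circ t) * circ t powi n - \<psi> (circ t) * circ t powi n)"
      unfolding f_def by (simp add: algebra_simps)
    also have "\<dots> = fourier \<phi> (-n) - fourier \<psi> (-n)"
      unfolding fou by (rule set_integral_diff(2)[OF a b])
    also have "\<dots> = 0" using fourier_eq[OF assms(3)] by simp
    finally show ?thesis .
  qed
  have zx: "(LINT t:{0..x}|lborel. f t) = 0" if "0 < x" "x < 1" for x
    by (rule arc_int[OF fi z that])
  have z1: "(LINT t:{0..1}|lborel. f t) = 0"
    using z[of 0] by simp
  have re: "AE t in lborel. t \<in> {0..1} \<longrightarrow> Re (f t) = 0"
    by (rule ae_zero_g[OF set_Re_Im(1)[OF fi]]) (simp_all add: set_Re_Im(2)[OF fi] set_Re_Im(2)[OF set_integrable_subset[OF fi]] zx z1)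
  have im: "AE t in lborel. t \<in> {0..1} \<longrightarrow> Im (f t) = 0"
    by (rule ae_zero_g[OF set_Re_Im(3)[OF fi]]) (simp_all add: set_Re_Im(4)[OF fi] set_Re_Im(4)[OF set_integrable_subset[OF fi]] zx z1)
  from re im show ?thesis
    by eventually_elim (auto simp: f_def complex_eq_iff)
qed

end
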